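(* Consider the two-dimensional $\mathrm{TM}_z$ Maxwell's equations $\partial_tE_z=\partial_xH_y-\partial_yH_x$, $\partial_tH_x=-\partial_yE_z$, $\partial_tH_y=\partial_xE_z$ with smooth solution, discretized on a (possibly non-rectangular) logically rectangular grid with points $(x_{i,j},y_{i,j})$ and mesh parameter $h$, with time step $\Delta t$. At each grid point $(x^0,y^0)=(x_{i,j},y_{i,j})$ with neighbors $(x^1,y^1),\dots,(x^K,y^K)$ (the points with indices $(i\pm1,j)$, $(i,j\pm1)$, at distance $O(h)$ from $(x^0,y^0)$), let $$A=\begin{pmatrix}1&x^0-x^0&y^0-y^0\\1&x^1-x^0&y^1-y^0\\\vdots&\vdots&\vdots\\1&x^K-x^0&y^K-y^0\end{pmatrix}.$$ Suppose there is a constant $D>0$ such that $\sigma_3(A)\ge Dh$ (the smallest singular value) at every grid point. Then the least square central difference scheme and the least square $\theta$-scheme are both first order accurate.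
   Context: Least squares fitting: for a field component $u$ with values $u^0,\dots,u^K$ at $(x^0,y^0),\dots,(x^K,y^K)$, let $\hat u(x,y)=\hat a+\hat b(x-x^0)+\hat c(y-y^0)$ minimize $\sum_{m=0}^K(\hat u(x^m,y^m)-u^m)^2$, i.e. $(\hat a,\hat b,\hat c)^T=(A^TA)^{-1}A^T(u^0,\dots,u^K)^T$. Denote $\hat u_{i,j}=\hat a$, $(\partial\hat u/\partial x)_{i,j}=\hat b$, $(\partial\hat u/\partial y)_{i,j}=\hat c$, computed from time-level $n$ data. Least square central difference scheme: $(E_z)^{n+1}_{i,j}=(E_z)^n_{i,j}+\Delta t((\partial\hat H_y/\partial x)^n_{i,j}-(\partial\hat H_x/\partial y)^n_{i,j})$, $(H_x)^{n+1}_{i,j}=(H_x)^n_{i,j}-\Delta t(\partial\hat E_z/\partial y)^n_{i,j}$, $(H_y)^{n+1}_{i,j}=(H_y)^n_{i,j}+\Delta t(\partial\hat E_z/\partial x)^n_{i,j}$. Least square $\theta$-scheme: the same, but with $(E_z)^n_{i,j},(H_x)^n_{i,j},(H_y)^n_{i,j}$ on the right replaced by the fitted values $(\hat E_z)^n_{i,j},(\hat H_x)^n_{i,j},(\hat H_y)^n_{i,j}$. *)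

theory Defs
  imports "HOL-Analysis.Analysis"
begin

definition pt :: "(real \<Rightarrow> real \<Rightarrow> real \<Rightarrow> real) \<Rightarrow> real \<Rightarrow> real \<Rightarrow> real \<Rightarrow> real" where
  "pt g t x y = deriv (\<lambda>s. g s x y) t"
definition px :: "(real \<Rightarrow> real \<Rightarrow> real \<Rightarrow> real) \<Rightarrow> real \<Rightarrow> real \<Rightarrow> real \<Rightarrow> real" where
  "px g t x y = deriv (\<lambda>s. g t s y) x"
definition py :: "(real \<Rightarrow> real \<Rightarrow> real \<Rightarrow> real) \<Rightarrow> real \<Rightarrow> real \<Rightarrow> real \<Rightarrow> real" where
  "py g t x y = deriv (\<lambda>s. g t x s) y"

fun Ck :: "nat \<Rightarrow> (real \<Rightarrow> real \<Rightarrow> real \<Rightarrow> real) \<Rightarrow> bool" where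
  "Ck 0 g = continuous_on UNIV (\<lambda>(t, x, y). g t x y)"
| "Ck (Suc k) g = ((\<forall>z. (\<lambda>(t, x, y). g t x y) differentiable (at z))
                    \<and> continuous_on UNIV (\<lambda>(t, x, y). g t x y)
                    \<and> Ck k (pt g) \<and> Ck k (px g) \<and> Ck k (py g))"

definition smooth3 :: "(real \<Rightarrow> real \<Rightarrow> real \<Rightarrow> real) \<Rightarrow> bool" where
  "smooth3 g \<longleftrightarrow> (\<forall>k. Ck k g)"

definition lsq_row :: "(nat \<Rightarrow> real \<times> real) \<Rightarrow> nat \<Rightarrow> real^3" where
  "lsq_row p m = vector [1, fst (p m) - fst (p 0), snd (p m) - snd (p 0)]"

definition sigma_min :: "(nat \<Rightarrow> real \<times> real) \<Rightarrow> nat \<Rightarrow> real" where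
  "sigma_min p K = Inf ((\<lambda>v. sqrt (\<Sum>m\<le>K. (lsq_row p m \<bullet> v)^2)) ` {v :: real^3. norm v = 1})"

text \<open>Least squares coefficients (a,b,c) = (A^T A)^{-1} A^T (u^0..u^K), stored as \$1,\$2,\$3.\<close>
definition lsq_fit :: "(nat \<Rightarrow> real \<times> real) \<Rightarrow> nat \<Rightarrow> (nat \<Rightarrow> real) \<Rightarrow> real^3" where
  "lsq_fit p K u =
     matrix_inv (\<chi> r s. \<Sum>m\<le>K. lsq_row p m $ r * lsq_row p m $ s)
       *v (\<chi> r. \<Sum>m\<le>K. lsq_row p m $ r * u m)"

definition stencil :: "(int \<times> int \<Rightarrow> real \<times> real) \<Rightarrow> int \<Rightarrow> int \<Rightarrow> nat \<Rightarrow> real \<times> real" where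
  "stencil X i j m =
     (if m = 0 then X (i, j) else if m = 1 then X (i + 1, j) else if m = 2 then X (i - 1, j)
      else if m = 3 then X (i, j + 1) else X (i, j - 1))"

definition grid_interior :: "(int \<times> int) set \<Rightarrow> (int \<times> int) set" where
  "grid_interior G = {(i, j). (i, j) \<in> G \<and> (i + 1, j) \<in> G \<and> (i - 1, j) \<in> G \<and> (i, j + 1) \<in> G \<and> (i, j - 1) \<in> G}"

definition sdata :: "(real \<Rightarrow> real \<Rightarrow> real \<Rightarrow> real) \<Rightarrow> real \<Rightarrow> (nat \<Rightarrow> real \<times> real) \<Rightarrow> nat \<Rightarrow> real" where
  "sdata g t p m = g t (fst (p m)) (snd (p m))"

text \<open>Local truncation errors (exact solution at t+dt minus one scheme step applied to exact
 data at t, divided by dt), at the point p 0 with K neighbours.\<close>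
definition trunc_cd ::
  "(real \<Rightarrow> real \<Rightarrow> real \<Rightarrow> real) \<Rightarrow> (real \<Rightarrow> real \<Rightarrow> real \<Rightarrow> real) \<Rightarrow> (real \<Rightarrow> real \<Rightarrow> real \<Rightarrow> real)
    \<Rightarrow> (nat \<Rightarrow> real \<times> real) \<Rightarrow> nat \<Rightarrow> real \<Rightarrow> real \<Rightarrow> real \<times> real \<times> real" where
  "trunc_cd E Hx Hy p K t dt =
    (let fE = lsq_fit p K (sdata E t p); fHx = lsq_fit p K (sdata Hx t p);
         fHy = lsq_fit p K (sdata Hy t p) in
     ((sdata E (t + dt) p 0 - (sdata E t p 0 + dt * (fHy $ 2 - fHx $ 3))) / dt,
      (sdata Hx (t + dt) p 0 - (sdata Hx t p 0 - dt * fE $ 3)) / dt,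
      (sdata Hy (t + dt) p 0 - (sdata Hy t p 0 + dt * fE $ 2)) / dt))"

definition trunc_th ::
  "(real \<Rightarrow> real \<Rightarrow> real \<Rightarrow> real) \<Rightarrow> (real \<Rightarrow> real \<Rightarrow> real \<Rightarrow> real) \<Rightarrow> (real \<Rightarrow> real \<Rightarrow> real \<Rightarrow> real)
    \<Rightarrow> (nat \<Rightarrow> real \<times> real) \<Rightarrow> nat \<Rightarrow> real \<Rightarrow> real \<Rightarrow> real \<times> real \<times> real" where
  "trunc_th E Hx Hy p K t dt =
    (let fE = lsq_fit p K (sdata E t p); fHx = lsq_fit p K (sdata Hx t p);
         fHy = lsq_fit p K (sdata Hy t p) in
     ((sdata E (t + dt) p 0 - (fE $ 1 + dt * (fHy $ 2 - fHx $ 3))) / dt,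
      (sdata Hx (t + dt) p 0 - (fHx $ 1 - dt * fE $ 3)) / dt,
      (sdata Hy (t + dt) p 0 - (fHy $ 1 + dt * fE $ 2)) / dt))"

definition first_order ::
  "((nat \<Rightarrow> real \<times> real) \<Rightarrow> nat \<Rightarrow> real \<Rightarrow> real \<Rightarrow> real \<times> real \<times> real)
    \<Rightarrow> real set \<Rightarrow> (real \<Rightarrow> int \<times> int \<Rightarrow> real \<times> real) \<Rightarrow> (real \<Rightarrow> (int \<times> int) set)
    \<Rightarrow> real \<Rightarrow> real \<Rightarrow> bool" where
  "first_order tau H X G lam T \<longleftrightarrow>
     (\<exists>C. \<forall>h\<in>H. \<forall>(i, j)\<in>grid_interior (G h). \<forall>t\<in>{0..T}.
        let r = tau (stencil (X h) i j) 4 t (lam * h) in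
        \<bar>fst r\<bar> \<le> C * h \<and> \<bar>fst (snd r)\<bar> \<le> C * h \<and> \<bar>snd (snd r)\<bar> \<le> C * h)"

end

theory Submission
  imports Defs "HOL-Analysis.Analysis"
begin

definition AT :: "(nat \<Rightarrow> real \<times> real) \<Rightarrow> nat \<Rightarrow> (nat \<Rightarrow> real) \<Rightarrow> real^3" where
  "AT p K y = (\<chi> r. \<Sum>m\<le>K. lsq_row p m $ r * y m)"
definition MM :: "(nat \<Rightarrow> real \<times> real) \<Rightarrow> nat \<Rightarrow> real^3^3" where
  "MM p K = (\<chi> r s. \<Sum>m\<le>K. lsq_row p m $ r * lsq_row p m $ s)"

lemma MM_mv: "MM p K *v v = AT p K (\<lambda>m. lsq_row p m \<bullet> v)"
  unfolding MM_def AT_def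
  by (simp add: vec_eq_iff matrix_vector_mult_def inner_vec_def sum_distrib_left sum_distrib_right
      mult.assoc mult.commute mult.left_commute sum.swap[where A=UNIV])

lemma inner_AT: "v \<bullet> AT p K y = (\<Sum>m\<le>K. (lsq_row p m \<bullet> v) * y m)"
  unfolding AT_def
  by (simp add: inner_vec_def sum_distrib_left sum_distrib_right
      mult.assoc mult.commute mult.left_commute sum.swap[where A=UNIV])

lemma AT_add: "AT p K (\<lambda>m. y m + z m) = AT p K y + AT p K z"
  unfolding AT_def by (simp add: vec_eq_iff distrib_left sum.distrib)

lemma row_z: "lsq_row p m \<bullet> vector [a,b,c] = a + b * (fst (p m) - fst (p 0)) + c * (snd (p m) - snd (p 0))"
  unfolding lsq_row_def by (simp add: inner_vec_def sum_3 mult.commute)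

lemma row0: "lsq_row p 0 \<bullet> w = w $ 1"
  unfolding lsq_row_def by (simp add: inner_vec_def sum_3)

lemma matrix_inv_left': "invertible A \<Longrightarrow> matrix_inv A ** A = mat 1"
  unfolding invertible_def matrix_inv_def by (metis (mono_tags, lifting) someI_ex)

lemma sigma_norm: "sigma_min p K * norm w \<le> sqrt (\<Sum>m\<le>K. (lsq_row p m \<bullet> w)^2)"
proof (cases "w = 0")
  case True then show ?thesis by simp
next
  case False
  let ?n = "norm w"
  have n: "?n > 0" using False by simp
  let ?v = "w /\<^sub>R ?n"
  have "sigma_min p K \<le> sqrt (\<Sum>m\<le>K. (lsq_row p m \<bullet> ?v)^2)"
    unfolding sigma_min_def
    by (rule cINF_lower) (auto intro!: bdd_belowI[where m=0] sum_nonneg simp: False)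
  also have "(\<Sum>m\<le>K. (lsq_row p m \<bullet> ?v)^2) = (\<Sum>m\<le>K. (lsq_row p m \<bullet> w)^2) / ?n^2"
    by (simp add: sum_distrib_left power_mult_distrib power_inverse divide_inverse mult.commute)
  also have "sqrt \<dots> = sqrt (\<Sum>m\<le>K. (lsq_row p m \<bullet> w)^2) / ?n"
    using n by (simp add: real_sqrt_divide)
  finally show ?thesis using n by (simp add: field_simps)
qed

lemma MM_quad: "w \<bullet> (MM p K *v w) = (\<Sum>m\<le>K. (lsq_row p m \<bullet> w)^2)"
  by (simp add: MM_mv inner_AT power2_eq_square)

lemma MM_invertible:
  assumes "sigma_min p K > 0" shows "invertible (MM p K)"
proof -
  have "inj ((*v) (MM p K))"
  proof (rule injI)
    fix x y assume "MM p K *v x = MM p K *v y"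
    then have "MM p K *v (x - y) = 0" by (simp add: matrix_vector_mult_diff_distrib)
    then have "(\<Sum>m\<le>K. (lsq_row p m \<bullet> (x - y))^2) = 0" using MM_quad[of "x - y" p K] by simp
    then have "sigma_min p K * norm (x - y) \<le> 0" using sigma_norm[of p K "x - y"] by simp
    then have "norm (x - y) \<le> 0" using assms by (simp add: mult_le_0_iff)
    then show "x = y" by simp
  qed
  then show ?thesis using invertible_left_inverse matrix_left_invertible_injective by blast
qed

lemma lsq_err:
  assumes sig: "sigma_min p K > 0"
    and u: "\<And>m. m \<le> K \<Longrightarrow> u m = a + b * (fst (p m) - fst (p 0)) + c * (snd (p m) - snd (p 0)) + r m"
  shows "\<bar>lsq_fit p K u $ 1 - a\<bar> \<le> L2_set r {..K}"
    "\<bar>lsq_fit p K u $ 2 - b\<bar> * sigma_min p K \<le> L2_set r {..K}"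
    "\<bar>lsq_fit p K u $ 3 - c\<bar> * sigma_min p K \<le> L2_set r {..K}"
proof -
  define z :: "real^3" where "z = vector [a, b, c]"
  have inv: "invertible (MM p K)" using MM_invertible[OF sig] .
  have li: "matrix_inv (MM p K) ** MM p K = mat 1" using matrix_inv_left'[OF inv] .
  then have ri: "MM p K ** matrix_inv (MM p K) = mat 1" using matrix_left_right_inverse by blast
  have fit: "lsq_fit p K u = matrix_inv (MM p K) *v AT p K u"
    unfolding lsq_fit_def MM_def AT_def ..
  have "AT p K u = AT p K (\<lambda>m. lsq_row p m \<bullet> z + r m)"
    unfolding AT_def using u by (auto simp: vec_eq_iff row_z z_def intro!: sum.cong)
  also have "\<dots> = MM p K *v z + AT p K r" by (simp add: AT_add MM_mv)
  finally have ATu: "AT p K u = MM p K *v z + AT p K r" .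
  define w where "w = lsq_fit p K u - z"
  have w: "w = matrix_inv (MM p K) *v AT p K r"
    unfolding w_def fit ATu
    by (simp add: matrix_vector_right_distrib matrix_vector_mul_assoc li)
  have Mw: "MM p K *v w = AT p K r"
    unfolding w by (simp add: matrix_vector_mul_assoc ri)
  define S where "S = (\<Sum>m\<le>K. (lsq_row p m \<bullet> w)^2)"
  have S0: "S \<ge> 0" unfolding S_def by (simp add: sum_nonneg)
  have "S = w \<bullet> AT p K r" unfolding S_def using MM_quad[of w p K] Mw by simp
  also have "\<dots> = (\<Sum>m\<le>K. (lsq_row p m \<bullet> w) * r m)" by (rule inner_AT)
  also have "\<dots> \<le> (\<Sum>m\<le>K. \<bar>lsq_row p m \<bullet> w\<bar> * \<bar>r m\<bar>)"
    by (rule sum_mono) (metis abs_ge_self abs_mult)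
  also have "\<dots> \<le> L2_set (\<lambda>m. lsq_row p m \<bullet> w) {..K} * L2_set r {..K}" by (rule L2_set_mult_ineq)
  also have "L2_set (\<lambda>m. lsq_row p m \<bullet> w) {..K} = sqrt S" unfolding S_def L2_set_def ..
  finally have SS: "S \<le> sqrt S * L2_set r {..K}" .
  have sq: "sqrt S \<le> L2_set r {..K}"
  proof (cases "sqrt S > 0")
    case True
    have "sqrt S * sqrt S \<le> sqrt S * L2_set r {..K}" using SS S0 by simp
    then show ?thesis using True mult_le_cancel_left_pos by blast
  next
    case False then show ?thesis using L2_set_nonneg[of r "{..K}"] S0 by simp
  qed
  have "(w $ 1)^2 \<le> S" unfolding S_def
    using member_le_sum[of 0 "{..K}" "\<lambda>m. (lsq_row p m \<bullet> w)^2"] by (simp add: row0)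
  then have "\<bar>w $ 1\<bar> \<le> sqrt S" using real_sqrt_abs real_sqrt_le_mono by metis
  then show "\<bar>lsq_fit p K u $ 1 - a\<bar> \<le> L2_set r {..K}" using sq by (simp add: w_def z_def)
  have sn: "sigma_min p K * norm w \<le> sqrt S" unfolding S_def by (rule sigma_norm)
  have "\<bar>w $ 2\<bar> * sigma_min p K \<le> norm w * sigma_min p K"
    using sig by (simp add: component_le_norm_cart)
  then show "\<bar>lsq_fit p K u $ 2 - b\<bar> * sigma_min p K \<le> L2_set r {..K}"
    using sq sn by (simp add: w_def z_def mult.commute)
  have "\<bar>w $ 3\<bar> * sigma_min p K \<le> norm w * sigma_min p K"
    using sig by (simp add: component_le_norm_cart)
  then show "\<bar>lsq_fit p K u $ 3 - c\<bar> * sigma_min p K \<le> L2_set r {..K}"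
    using sq sn by (simp add: w_def z_def mult.commute)
qed

lemma Ck_dx: assumes "Ck (Suc k) g" shows "((\<lambda>s. g t s y) has_real_derivative px g t x y) (at x)"
proof -
  have d: "(\<lambda>(t, x, y). g t x y) differentiable at (t, x, y)" using assms by simp
  have e: "(\<lambda>s::real. (t, s, y)) differentiable at x" by (auto intro!: derivative_intros)
  have "((\<lambda>(t, x, y). g t x y) \<circ> (\<lambda>s. (t, s, y))) differentiable at x"
    using differentiable_chain_at[OF e d] by simp
  then have "(\<lambda>s. g t s y) differentiable at x" by (simp add: o_def)
  then show ?thesis unfolding px_def using DERIV_deriv_iff_real_differentiable by blast
qed

lemma Ck_dy: assumes "Ck (Suc k) g" shows "((\<lambda>s. g t x s) has_real_derivative py g t x y) (at y)"
proof -
  have d: "(\<lambda>(t, x, y). g t x y) differentiable at (t, x, y)" using assms by simp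
  have e: "(\<lambda>s::real. (t, x, s)) differentiable at y" by (auto intro!: derivative_intros)
  have "((\<lambda>(t, x, y). g t x y) \<circ> (\<lambda>s. (t, x, s))) differentiable at y"
    using differentiable_chain_at[OF e d] by simp
  then have "(\<lambda>s. g t x s) differentiable at y" by (simp add: o_def)
  then show ?thesis unfolding py_def using DERIV_deriv_iff_real_differentiable by blast
qed

lemma Ck_dt: assumes "Ck (Suc k) g" shows "((\<lambda>s. g s x y) has_real_derivative pt g t x y) (at t)"
proof -
  have d: "(\<lambda>(t, x, y). g t x y) differentiable at (t, x, y)" using assms by simp
  have e: "(\<lambda>s::real. (s, x, y)) differentiable at t" by (auto intro!: derivative_intros)
  have "((\<lambda>(t, x, y). g t x y) \<circ> (\<lambda>s. (s, x, y))) differentiable at t"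
    using differentiable_chain_at[OF e d] by simp
  then have "(\<lambda>s. g s x y) differentiable at t" by (simp add: o_def)
  then show ?thesis unfolding pt_def using DERIV_deriv_iff_real_differentiable by blast
qed

lemma cont_bound:
  assumes "Ck 0 f"
  shows "\<exists>B\<ge>0. \<forall>t x y. t \<in> {a..b} \<longrightarrow> x \<in> {-R..R} \<longrightarrow> y \<in> {-R..R} \<longrightarrow> \<bar>f t x y\<bar> \<le> B"
proof -
  define S where "S = {a..b} \<times> {-R..R} \<times> {-R..R}"
  have cS: "compact S" unfolding S_def by (intro compact_Times compact_Icc)
  have "continuous_on S (\<lambda>(t, x, y). f t x y)"
    using assms continuous_on_subset by auto
  then have "compact ((\<lambda>(t, x, y). f t x y) ` S)" using compact_continuous_image cS by blast
  then obtain B where B: "\<forall>z\<in>(\<lambda>(t, x, y). f t x y) ` S. norm z \<le> B"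
    using compact_imp_bounded bounded_iff by metis
  show ?thesis
  proof (intro exI[of _ "\<bar>B\<bar>"] conjI allI impI)
    fix t x y assume "t \<in> {a..b}" "x \<in> {-R..R}" "y \<in> {-R..R}"
    then have "(t, x, y) \<in> S" unfolding S_def by simp
    then have "norm (f t x y) \<le> B" using B by force
    then show "\<bar>f t x y\<bar> \<le> \<bar>B\<bar>" by simp
  qed simp
qed

lemma lip:
  assumes d: "\<And>s. (\<phi> has_real_derivative \<phi>' s) (at s)"
    and bd: "\<And>s. min a b \<le> s \<Longrightarrow> s \<le> max a b \<Longrightarrow> \<bar>\<phi>' s\<bar> \<le> L"
  shows "\<bar>\<phi> b - \<phi> a\<bar> \<le> L * \<bar>b - a\<bar>"
proof -
  consider "a < b" | "a = b" | "b < a" by linarith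
  then show ?thesis
  proof cases
    case 1
    then obtain z where z: "a < z" "z < b" "\<phi> b - \<phi> a = (b - a) * \<phi>' z"
      using MVT2[of a b \<phi> \<phi>'] d by blast
    have "\<bar>\<phi>' z\<bar> \<le> L" using bd z 1 by simp
    then show ?thesis using z 1 by (simp add: abs_mult mult.commute mult_left_mono)
  next
    case 2 then show ?thesis by simp
  next
    case 3
    then obtain z where z: "b < z" "z < a" "\<phi> a - \<phi> b = (a - b) * \<phi>' z"
      using MVT2[of b a \<phi> \<phi>'] d by blast
    have "\<bar>\<phi>' z\<bar> \<le> L" using bd z 3 by simp
    then show ?thesis using z 3 by (simp add: abs_mult mult.commute mult_left_mono abs_minus_commute)
  qed
qed

lemma taylor1:
  assumes d1: "\<And>s. (f has_real_derivative f1 s) (at s)"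
    and d2: "\<And>s. (f1 has_real_derivative f2 s) (at s)"
    and bd: "\<And>s. min x0 x \<le> s \<Longrightarrow> s \<le> max x0 x \<Longrightarrow> \<bar>f2 s\<bar> \<le> M"
  shows "\<bar>f x - f x0 - f1 x0 * (x - x0)\<bar> \<le> M * (x - x0)^2"
proof -
  have M0: "M \<ge> 0" using bd[of x0] by (smt (verit) max.cobounded1 min.cobounded1)
  have b1: "\<bar>f1 s - f1 x0\<bar> \<le> M * \<bar>x - x0\<bar>" if "min x0 x \<le> s" "s \<le> max x0 x" for s
  proof -
    have "\<bar>f1 s - f1 x0\<bar> \<le> M * \<bar>s - x0\<bar>"
      by (rule lip[OF d2]) (rule bd, use that in auto)
    also have "\<dots> \<le> M * \<bar>x - x0\<bar>" using that M0 by (intro mult_left_mono) auto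
    finally show ?thesis .
  qed
  have "\<bar>(f x - f1 x0 * x) - (f x0 - f1 x0 * x0)\<bar> \<le> (M * \<bar>x - x0\<bar>) * \<bar>x - x0\<bar>"
    by (rule lip[where \<phi>' = "\<lambda>s. f1 s - f1 x0"])
       (auto intro!: derivative_eq_intros d1 b1)
  then show ?thesis by (simp add: algebra_simps power2_eq_square abs_mult)
qed

lemma absab: "\<bar>a\<bar> * \<bar>b\<bar> \<le> (b::real)^2 + a^2"
proof (cases "\<bar>a\<bar> \<le> \<bar>b\<bar>")
  case True
  have 1: "\<bar>a\<bar> * \<bar>b\<bar> \<le> b * b" using mult_right_mono[OF True abs_ge_zero[of b]] by simp
  have 2: "0 \<le> a * a" by simp
  show ?thesis unfolding power2_eq_square using 1 2 by linarith
next
  case False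
  then have F: "\<bar>b\<bar> \<le> \<bar>a\<bar>" by simp
  have 1: "\<bar>a\<bar> * \<bar>b\<bar> \<le> a * a" using mult_left_mono[OF F abs_ge_zero[of a]] by simp
  have 2: "0 \<le> b * b" by simp
  show ?thesis unfolding power2_eq_square using 1 2 by linarith
qed

lemma abs3: "\<bar>A\<bar> \<le> (a::real) \<Longrightarrow> \<bar>B\<bar> \<le> b \<Longrightarrow> \<bar>C\<bar> \<le> c \<Longrightarrow> \<bar>A + B + C\<bar> \<le> a + b + c"
  by linarith

definition TB :: "(real \<Rightarrow> real \<Rightarrow> real \<Rightarrow> real) \<Rightarrow> real \<Rightarrow> real \<Rightarrow> real \<Rightarrow> real \<Rightarrow> bool" where
  "TB g a b R Mt \<longleftrightarrow> (\<forall>t s x y. t \<in> {a..b} \<longrightarrow> s \<in> {a..b} \<longrightarrow> x \<in> {-R..R} \<longrightarrow> y \<in> {-R..R} \<longrightarrow>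
       \<bar>g s x y - g t x y - pt g t x y * (s - t)\<bar> \<le> Mt * (s - t)^2)"
definition SB :: "(real \<Rightarrow> real \<Rightarrow> real \<Rightarrow> real) \<Rightarrow> real \<Rightarrow> real \<Rightarrow> real \<Rightarrow> real \<Rightarrow> bool" where
  "SB g a b R Cs \<longleftrightarrow> (\<forall>t x y x' y'. t \<in> {a..b} \<longrightarrow> x \<in> {-R..R} \<longrightarrow> y \<in> {-R..R} \<longrightarrow> x' \<in> {-R..R} \<longrightarrow> y' \<in> {-R..R} \<longrightarrow>
       \<bar>g t x' y' - g t x y - px g t x y * (x' - x) - py g t x y * (y' - y)\<bar> \<le> Cs * ((x' - x)^2 + (y' - y)^2))"

lemma field_bounds':
  assumes g: "Ck 2 g"
  shows "\<exists>Mt Cs. Mt \<ge> 0 \<and> Cs \<ge> 0 \<and> TB g a b R Mt \<and> SB g a b R Cs"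
proof -
  have g2: "Ck (Suc 1) g" using g by (simp add: numeral_2_eq_2)
  have t1: "Ck (Suc 0) (pt g)" and x1: "Ck (Suc 0) (px g)" and y1: "Ck (Suc 0) (py g)"
    using g2 by auto
  have c0: "Ck 0 (pt (pt g))" "Ck 0 (px (px g))" "Ck 0 (py (px g))" "Ck 0 (py (py g))"
    using t1 x1 y1 by auto
  obtain Btt where Btt: "Btt \<ge> 0" "\<forall>t x y. t \<in> {a..b} \<longrightarrow> x \<in> {-R..R} \<longrightarrow> y \<in> {-R..R} \<longrightarrow> \<bar>pt (pt g) t x y\<bar> \<le> Btt"
    using cont_bound[OF c0(1), of a b R] by blast
  obtain Bxx where Bxx: "Bxx \<ge> 0" "\<forall>t x y. t \<in> {a..b} \<longrightarrow> x \<in> {-R..R} \<longrightarrow> y \<in> {-R..R} \<longrightarrow> \<bar>px (px g) t x y\<bar> \<le> Bxx"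
    using cont_bound[OF c0(2), of a b R] by blast
  obtain Bxy where Bxy: "Bxy \<ge> 0" "\<forall>t x y. t \<in> {a..b} \<longrightarrow> x \<in> {-R..R} \<longrightarrow> y \<in> {-R..R} \<longrightarrow> \<bar>py (px g) t x y\<bar> \<le> Bxy"
    using cont_bound[OF c0(3), of a b R] by blast
  obtain Byy where Byy: "Byy \<ge> 0" "\<forall>t x y. t \<in> {a..b} \<longrightarrow> x \<in> {-R..R} \<longrightarrow> y \<in> {-R..R} \<longrightarrow> \<bar>py (py g) t x y\<bar> \<le> Byy"
    using cont_bound[OF c0(4), of a b R] by blast
  have time: "\<bar>g s x y - g t x y - pt g t x y * (s - t)\<bar> \<le> Btt * (s - t)^2"
    if "t \<in> {a..b}" "s \<in> {a..b}" "x \<in> {-R..R}" "y \<in> {-R..R}" for t s x y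
    by (rule taylor1[OF Ck_dt[OF g2] Ck_dt[OF t1]], rule Btt(2)[rule_format], use that in auto)
  have space: "\<bar>g t x' y' - g t x y - px g t x y * (x' - x) - py g t x y * (y' - y)\<bar>
      \<le> (Bxx + Bxy + Byy) * ((x' - x)^2 + (y' - y)^2)"
    if "t \<in> {a..b}" "x \<in> {-R..R}" "y \<in> {-R..R}" "x' \<in> {-R..R}" "y' \<in> {-R..R}" for t x y x' y'
  proof -
    have e1: "\<bar>g t x' y' - g t x y' - px g t x y' * (x' - x)\<bar> \<le> Bxx * (x' - x)^2"
      by (rule taylor1[OF Ck_dx[OF g2] Ck_dx[OF x1]], rule Bxx(2)[rule_format], use that in auto)
    have e2: "\<bar>px g t x y' - px g t x y\<bar> \<le> Bxy * \<bar>y' - y\<bar>"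
      by (rule lip[OF Ck_dy[OF x1]], rule Bxy(2)[rule_format], use that in auto)
    have e3: "\<bar>g t x y' - g t x y - py g t x y * (y' - y)\<bar> \<le> Byy * (y' - y)^2"
      by (rule taylor1[OF Ck_dy[OF g2] Ck_dy[OF y1]], rule Byy(2)[rule_format], use that in auto)
    have e2': "\<bar>(px g t x y' - px g t x y) * (x' - x)\<bar> \<le> Bxy * ((x' - x)^2 + (y' - y)^2)"
    proof -
      have "\<bar>(px g t x y' - px g t x y) * (x' - x)\<bar> \<le> Bxy * \<bar>y' - y\<bar> * \<bar>x' - x\<bar>"
        unfolding abs_mult by (rule mult_right_mono[OF e2]) simp
      also have "\<dots> \<le> Bxy * ((x' - x)^2 + (y' - y)^2)"
      proof -
        have "\<bar>y' - y\<bar> * \<bar>x' - x\<bar> \<le> (x' - x)^2 + (y' - y)^2"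
          by (rule absab)
        then show ?thesis using Bxy(1) by (simp add: mult.assoc mult_left_mono)
      qed
      finally show ?thesis .
    qed
    have eq: "g t x' y' - g t x y - px g t x y * (x' - x) - py g t x y * (y' - y)
      = (g t x' y' - g t x y' - px g t x y' * (x' - x)) + (px g t x y' - px g t x y) * (x' - x)
        + (g t x y' - g t x y - py g t x y * (y' - y))" by (simp add: algebra_simps)
    have "Bxx * (x' - x)^2 + Byy * (y' - y)^2 \<le> (Bxx + Byy) * ((x' - x)^2 + (y' - y)^2)"
      using Bxx(1) Byy(1) by (simp add: algebra_simps add_mono mult_left_mono)
    then show ?thesis unfolding eq using abs3[OF e1 e2' e3] by (simp add: algebra_simps)
  qed
  show ?thesis
  proof (intro exI conjI)
    show "0 \<le> Btt" by (rule Btt(1))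
    show "0 \<le> Bxx + Bxy + Byy" using Bxx(1) Bxy(1) Byy(1) by simp
    show "TB g a b R Btt" unfolding TB_def using time by blast
    show "SB g a b R (Bxx + Bxy + Byy)" unfolding SB_def using space by blast
  qed
qed

lemma stencil_in: "(i, j) \<in> grid_interior G \<Longrightarrow> m \<le> 4 \<Longrightarrow> \<exists>q\<in>G. stencil X i j m = X q"
  unfolding grid_interior_def stencil_def by auto

lemma stencil0: "stencil X i j 0 = X (i, j)" unfolding stencil_def by simp

lemma fit_bounds:
  fixes g :: "real \<Rightarrow> real \<Rightarrow> real \<Rightarrow> real"
  assumes sig: "sigma_min p 4 \<ge> D * h" and D: "D > 0" and h: "h > 0"
    and space: "\<And>m. m \<le> 4 \<Longrightarrow> \<bar>g t (fst (p m)) (snd (p m)) - g t (fst (p 0)) (snd (p 0))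
        - gx * (fst (p m) - fst (p 0)) - gy * (snd (p m) - snd (p 0))\<bar>
        \<le> Cs * ((fst (p m) - fst (p 0))^2 + (snd (p m) - snd (p 0))^2)"
    and pd: "\<And>m. m \<le> 4 \<Longrightarrow> (fst (p m) - fst (p 0))^2 + (snd (p m) - snd (p 0))^2 \<le> (c * h)^2"
    and Cs: "Cs \<ge> 0"
  shows "\<bar>lsq_fit p 4 (sdata g t p) $ 1 - g t (fst (p 0)) (snd (p 0))\<bar> \<le> 5 * Cs * c^2 * h^2"
    "\<bar>lsq_fit p 4 (sdata g t p) $ 2 - gx\<bar> \<le> 5 * Cs * c^2 * h / D"
    "\<bar>lsq_fit p 4 (sdata g t p) $ 3 - gy\<bar> \<le> 5 * Cs * c^2 * h / D"
proof -
  define r where "r m = sdata g t p m - (g t (fst (p 0)) (snd (p 0)) + gx * (fst (p m) - fst (p 0)) + gy * (snd (p m) - snd (p 0)))" for m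
  have rb: "\<bar>r m\<bar> \<le> Cs * (c * h)^2" if "m \<le> 4" for m
  proof -
    have "\<bar>r m\<bar> \<le> Cs * ((fst (p m) - fst (p 0))^2 + (snd (p m) - snd (p 0))^2)"
      using space[OF that] unfolding r_def sdata_def by (simp add: algebra_simps)
    also have "\<dots> \<le> Cs * (c * h)^2" by (rule mult_left_mono[OF pd[OF that] Cs])
    finally show ?thesis .
  qed
  have L: "L2_set r {..4} \<le> 5 * Cs * c^2 * h^2"
  proof -
    have "L2_set r {..4} \<le> (\<Sum>m\<le>4. \<bar>r m\<bar>)" by (rule L2_set_le_sum_abs)
    also have "\<dots> \<le> (\<Sum>m\<le>(4::nat). Cs * (c * h)^2)" by (rule sum_mono) (simp add: rb)
    also have "\<dots> = 5 * Cs * c^2 * h^2" by (simp add: power_mult_distrib)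
    finally show ?thesis .
  qed
  have s0: "sigma_min p 4 > 0" using sig D h by (smt (verit) mult_pos_pos)
  have u: "\<And>m. m \<le> 4 \<Longrightarrow> sdata g t p m = g t (fst (p 0)) (snd (p 0)) + gx * (fst (p m) - fst (p 0)) + gy * (snd (p m) - snd (p 0)) + r m"
    unfolding r_def by simp
  note e = lsq_err[OF s0 u]
  show "\<bar>lsq_fit p 4 (sdata g t p) $ 1 - g t (fst (p 0)) (snd (p 0))\<bar> \<le> 5 * Cs * c^2 * h^2"
    using e(1) L by linarith
  have Dh: "D * h > 0" using D h by simp
  have k: "\<bar>z\<bar> \<le> 5 * Cs * c^2 * h / D" if "\<bar>z\<bar> * sigma_min p 4 \<le> L2_set r {..4}" for z
  proof -
    have "\<bar>z\<bar> * (D * h) \<le> \<bar>z\<bar> * sigma_min p 4" using sig by (simp add: mult_left_mono)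
    also have "\<dots> \<le> 5 * Cs * c^2 * h^2" using that L by linarith
    finally have "\<bar>z\<bar> * (D * h) \<le> 5 * Cs * c^2 * h^2" .
    then have "\<bar>z\<bar> \<le> 5 * Cs * c^2 * h^2 / (D * h)" using Dh by (simp add: pos_le_divide_eq)
    also have "\<dots> = 5 * Cs * c^2 * h / D" using h by (simp add: power2_eq_square field_simps)
    finally show ?thesis .
  qed
  show "\<bar>lsq_fit p 4 (sdata g t p) $ 2 - gx\<bar> \<le> 5 * Cs * c^2 * h / D" by (rule k[OF e(2)])
  show "\<bar>lsq_fit p 4 (sdata g t p) $ 3 - gy\<bar> \<le> 5 * Cs * c^2 * h / D" by (rule k[OF e(3)])
qed

lemma step_arith:
  fixes dt :: real
  assumes dt: "dt > 0" and tm: "\<bar>Ep - E0 - P * dt\<bar> \<le> m * dt^2" and P: "P = a - b"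
    and B: "\<bar>B - E0\<bar> \<le> e0" and e1: "\<bar>\<alpha> - a\<bar> \<le> e1" and e2: "\<bar>\<beta> - b\<bar> \<le> e2"
  shows "\<bar>(Ep - (B + dt * (\<alpha> - \<beta>))) / dt\<bar> \<le> m * dt + e0 / dt + e1 + e2"
proof -
  have eq: "Ep - (B + dt * (\<alpha> - \<beta>)) = (Ep - E0 - P * dt) - (B - E0) + dt * (a - \<alpha>) - dt * (b - \<beta>)"
    unfolding P by (simp add: algebra_simps)
  have "\<bar>dt * (a - \<alpha>)\<bar> \<le> dt * e1" using dt e1 by (simp add: abs_mult abs_minus_commute mult_left_mono)
  moreover have "\<bar>dt * (b - \<beta>)\<bar> \<le> dt * e2" using dt e2 by (simp add: abs_mult abs_minus_commute mult_left_mono)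
  ultimately have "\<bar>Ep - (B + dt * (\<alpha> - \<beta>))\<bar> \<le> m * dt^2 + e0 + dt * e1 + dt * e2"
    unfolding eq using tm B by linarith
  also have "\<dots> = (m * dt + e0 / dt + e1 + e2) * dt" using dt by (simp add: field_simps power2_eq_square)
  finally show ?thesis using dt by (simp add: abs_divide pos_divide_le_eq)
qed

lemma final_arith:
  fixes h :: real
  assumes "\<bar>\<tau>\<bar> \<le> m * dt + e0 / dt + e1 + e2" "0 \<le> m" "m \<le> Mt" "dt = lam * h" "lam > 0" "h > 0"
    "0 \<le> e0" "e0 \<le> Q * h^2" "e1 \<le> Q * h / D" "e2 \<le> Q * h / D"
  shows "\<bar>\<tau>\<bar> \<le> (Mt * lam + Q / lam + 2 * Q / D) * h"
proof -
  have dt: "dt > 0" using assms by simp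
  have 1: "m * dt \<le> Mt * lam * h" using assms dt by (simp add: mult_right_mono)
  have "e0 / dt \<le> Q * h^2 / dt" using assms dt by (simp add: divide_right_mono)
  also have "\<dots> = Q / lam * h" using assms by (simp add: power2_eq_square field_simps)
  finally have 2: "e0 / dt \<le> Q / lam * h" .
  have "(Mt * lam + Q / lam + 2 * Q / D) * h = Mt * lam * h + Q / lam * h + Q * h / D + Q * h / D"
    by (simp add: field_simps)
  then show ?thesis using assms 1 2 by linarith
qed

lemma field_at:
  fixes g :: "real \<Rightarrow> real \<Rightarrow> real \<Rightarrow> real"
  assumes TB: "TB g a b R Mtg" and SB: "SB g a b R Csg"
    and Mt: "0 \<le> Mtg" "Mtg \<le> Mt" and Cs: "0 \<le> Csg" "Csg \<le> Cs"
    and box: "\<And>m. m \<le> 4 \<Longrightarrow> fst (p m) \<in> {-R..R} \<and> snd (p m) \<in> {-R..R}"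
    and pd: "\<And>m. m \<le> 4 \<Longrightarrow> (fst (p m) - fst (p 0))^2 + (snd (p m) - snd (p 0))^2 \<le> (c * h)^2"
    and sig: "sigma_min p 4 \<ge> D * h" and D: "D > 0" and h: "h > 0"
    and tt: "t \<in> {a..b}" "t + dt \<in> {a..b}"
  shows "\<bar>lsq_fit p 4 (sdata g t p) $ 1 - g t (fst (p 0)) (snd (p 0))\<bar> \<le> 5 * Cs * c^2 * h^2"
    "\<bar>lsq_fit p 4 (sdata g t p) $ 2 - px g t (fst (p 0)) (snd (p 0))\<bar> \<le> 5 * Cs * c^2 * h / D"
    "\<bar>lsq_fit p 4 (sdata g t p) $ 3 - py g t (fst (p 0)) (snd (p 0))\<bar> \<le> 5 * Cs * c^2 * h / D"
    "\<bar>g (t + dt) (fst (p 0)) (snd (p 0)) - g t (fst (p 0)) (snd (p 0)) - pt g t (fst (p 0)) (snd (p 0)) * dt\<bar> \<le> Mt * dt^2"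
proof -
  have b0: "fst (p 0) \<in> {-R..R}" "snd (p 0) \<in> {-R..R}" using box[of 0] by auto
  have sp: "\<bar>g t (fst (p m)) (snd (p m)) - g t (fst (p 0)) (snd (p 0))
        - px g t (fst (p 0)) (snd (p 0)) * (fst (p m) - fst (p 0)) - py g t (fst (p 0)) (snd (p 0)) * (snd (p m) - snd (p 0))\<bar>
        \<le> Cs * ((fst (p m) - fst (p 0))^2 + (snd (p m) - snd (p 0))^2)" if "m \<le> 4" for m
  proof -
    have "\<bar>g t (fst (p m)) (snd (p m)) - g t (fst (p 0)) (snd (p 0))
        - px g t (fst (p 0)) (snd (p 0)) * (fst (p m) - fst (p 0)) - py g t (fst (p 0)) (snd (p 0)) * (snd (p m) - snd (p 0))\<bar>
        \<le> Csg * ((fst (p m) - fst (p 0))^2 + (snd (p m) - snd (p 0))^2)"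
      using SB tt b0 box[OF that] unfolding SB_def by blast
    also have "\<dots> \<le> Cs * ((fst (p m) - fst (p 0))^2 + (snd (p m) - snd (p 0))^2)"
      using Cs by (intro mult_right_mono) auto
    finally show ?thesis .
  qed
  note f = fit_bounds[where g=g and t=t and gx="px g t (fst (p 0)) (snd (p 0))" and gy="py g t (fst (p 0)) (snd (p 0))", OF sig D h sp pd]
  show "\<bar>lsq_fit p 4 (sdata g t p) $ 1 - g t (fst (p 0)) (snd (p 0))\<bar> \<le> 5 * Cs * c^2 * h^2"
    "\<bar>lsq_fit p 4 (sdata g t p) $ 2 - px g t (fst (p 0)) (snd (p 0))\<bar> \<le> 5 * Cs * c^2 * h / D"
    "\<bar>lsq_fit p 4 (sdata g t p) $ 3 - py g t (fst (p 0)) (snd (p 0))\<bar> \<le> 5 * Cs * c^2 * h / D"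
    using f Cs by auto
  have "\<bar>g (t + dt) (fst (p 0)) (snd (p 0)) - g t (fst (p 0)) (snd (p 0)) - pt g t (fst (p 0)) (snd (p 0)) * (t + dt - t)\<bar> \<le> Mtg * (t + dt - t)^2"
    using TB tt b0 unfolding TB_def by blast
  also have "\<dots> \<le> Mt * (t + dt - t)^2" using Mt by (intro mult_right_mono) auto
  finally show "\<bar>g (t + dt) (fst (p 0)) (snd (p 0)) - g t (fst (p 0)) (snd (p 0)) - pt g t (fst (p 0)) (snd (p 0)) * dt\<bar> \<le> Mt * dt^2"
    by simp
qed

theorem theorem3p4:
  fixes E Hx Hy :: "real \<Rightarrow> real \<Rightarrow> real \<Rightarrow> real"
    and H :: "real set"
    and X :: "real \<Rightarrow> int \<times> int \<Rightarrow> real \<times> real"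
    and G :: "real \<Rightarrow> (int \<times> int) set"
    and \<Omega> :: "(real \<times> real) set"
    and T c D lam h0 :: real
  assumes smooth: "smooth3 E" "smooth3 Hx" "smooth3 Hy"
    and maxwell: "\<And>t x y. pt E t x y = px Hy t x y - py Hx t x y"
                 "\<And>t x y. pt Hx t x y = - py E t x y"
                 "\<And>t x y. pt Hy t x y = px E t x y"
    and dom: "compact \<Omega>" "\<And>h i j. h \<in> H \<Longrightarrow> (i, j) \<in> G h \<Longrightarrow> X h (i, j) \<in> \<Omega>"
    and hpos: "\<And>h. h \<in> H \<Longrightarrow> 0 < h \<and> h \<le> h0"
    and c: "c > 0"
    and mesh: "\<And>h i j m. h \<in> H \<Longrightarrow> (i, j) \<in> grid_interior (G h) \<Longrightarrow> m \<le> 4 \<Longrightarrow>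
                 dist (stencil (X h) i j m) (X h (i, j)) \<le> c * h"
    and D: "D > 0"
    and sigma: "\<And>h i j. h \<in> H \<Longrightarrow> (i, j) \<in> grid_interior (G h) \<Longrightarrow>
                 sigma_min (stencil (X h) i j) 4 \<ge> D * h"
    and lam: "lam > 0"
  shows "first_order (trunc_cd E Hx Hy) H X G lam T \<and> first_order (trunc_th E Hx Hy) H X G lam T"
proof -
  obtain R where R: "\<forall>q\<in>\<Omega>. norm q \<le> R"
    using compact_imp_bounded[OF dom(1)] bounded_iff by metis
  define b where "b = T + lam * h0"
  have Ck2: "Ck 2 E" "Ck 2 Hx" "Ck 2 Hy" using smooth unfolding smooth3_def by auto
  obtain MtE CsE where E0: "MtE \<ge> 0" "CsE \<ge> 0" and TE: "TB E 0 b R MtE" and SE: "SB E 0 b R CsE"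
    using field_bounds'[OF Ck2(1), of 0 b R] by blast
  obtain MtX CsX where X0: "MtX \<ge> 0" "CsX \<ge> 0" and TX: "TB Hx 0 b R MtX" and SX: "SB Hx 0 b R CsX"
    using field_bounds'[OF Ck2(2), of 0 b R] by blast
  obtain MtY CsY where Y0: "MtY \<ge> 0" "CsY \<ge> 0" and TY: "TB Hy 0 b R MtY" and SY: "SB Hy 0 b R CsY"
    using field_bounds'[OF Ck2(3), of 0 b R] by blast
  define Mt where "Mt = MtE + MtX + MtY"
  define Cs where "Cs = CsE + CsX + CsY"
  define Q where "Q = 5 * Cs * c^2"
  define C where "C = Mt * lam + Q / lam + 2 * Q / D"
  have Q0: "Q \<ge> 0" unfolding Q_def Cs_def using E0 X0 Y0 by simp
  have key: "\<bar>fst (trunc_cd E Hx Hy (stencil (X h) i j) 4 t (lam * h))\<bar> \<le> C * h \<and>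
     \<bar>fst (snd (trunc_cd E Hx Hy (stencil (X h) i j) 4 t (lam * h)))\<bar> \<le> C * h \<and>
     \<bar>snd (snd (trunc_cd E Hx Hy (stencil (X h) i j) 4 t (lam * h)))\<bar> \<le> C * h \<and>
     \<bar>fst (trunc_th E Hx Hy (stencil (X h) i j) 4 t (lam * h))\<bar> \<le> C * h \<and>
     \<bar>fst (snd (trunc_th E Hx Hy (stencil (X h) i j) 4 t (lam * h)))\<bar> \<le> C * h \<and>
     \<bar>snd (snd (trunc_th E Hx Hy (stencil (X h) i j) 4 t (lam * h)))\<bar> \<le> C * h"
    if hH: "h \<in> H" and ij: "(i, j) \<in> grid_interior (G h)" and t: "t \<in> {0..T}" for h i j t
  proof -
    define p where "p = stencil (X h) i j"
    define dt where "dt = lam * h"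
    have h: "0 < h" "h \<le> h0" using hpos[OF hH] by auto
    have dt: "dt > 0" unfolding dt_def using lam h by simp
    have box: "fst (p m) \<in> {-R..R} \<and> snd (p m) \<in> {-R..R}" if m4: "m \<le> 4" for m
    proof -
      obtain q where q: "q \<in> G h" "p m = X h q" using stencil_in[OF ij m4] unfolding p_def by blast
      obtain i' j' where "q = (i', j')" by fastforce
      then have "p m \<in> \<Omega>" using q dom(2)[OF hH] by simp
      then have n: "norm (p m) \<le> R" using R by blast
      obtain u v where uv: "p m = (u, v)" by fastforce
      have "norm u \<le> R" using n norm_fst_le[of u v] uv by simp
      moreover have "norm v \<le> R" using n norm_snd_le[of v u] uv by simp
      ultimately show ?thesis using uv by auto
    qed
    have pd: "(fst (p m) - fst (p 0))^2 + (snd (p m) - snd (p 0))^2 \<le> (c * h)^2" if "m \<le> 4" for m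
    proof -
      have "dist (p m) (p 0) \<le> c * h" using mesh[OF hH ij that] unfolding p_def stencil0 .
      moreover have "dist (p m) (p 0) = sqrt ((fst (p m) - fst (p 0))^2 + (snd (p m) - snd (p 0))^2)"
        by (simp add: dist_prod_def dist_real_def)
      ultimately have "sqrt ((fst (p m) - fst (p 0))^2 + (snd (p m) - snd (p 0))^2) \<le> c * h" by simp
      then show ?thesis by (simp add: real_sqrt_le_iff sqrt_le_D)
    qed
    have sig: "sigma_min p 4 \<ge> D * h" using sigma[OF hH ij] unfolding p_def .
    have tt: "t \<in> {0..b}" "t + dt \<in> {0..b}"
    proof -
      have "lam * h \<le> lam * h0" using h lam by (simp add: mult_left_mono)
      moreover have "0 \<le> lam * h" using h lam by simp
      ultimately show "t \<in> {0..b}" "t + dt \<in> {0..b}" using t unfolding b_def dt_def by auto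
    qed
    have MtE: "MtE \<le> Mt" "MtX \<le> Mt" "MtY \<le> Mt" unfolding Mt_def using E0 X0 Y0 by auto
    have CsE: "CsE \<le> Cs" "CsX \<le> Cs" "CsY \<le> Cs" unfolding Cs_def using E0 X0 Y0 by auto
    note fE = field_at[OF TE SE E0(1) MtE(1) E0(2) CsE(1) box pd sig D h(1) tt, folded Q_def]
    note fX = field_at[OF TX SX X0(1) MtE(2) X0(2) CsE(2) box pd sig D h(1) tt, folded Q_def]
    note fY = field_at[OF TY SY Y0(1) MtE(3) Y0(2) CsE(3) box pd sig D h(1) tt, folded Q_def]
    define x0 where "x0 = fst (p 0)"
    define y0 where "y0 = snd (p 0)"
    define aE where "aE = lsq_fit p 4 (sdata E t p)"
    define aX where "aX = lsq_fit p 4 (sdata Hx t p)"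
    define aY where "aY = lsq_fit p 4 (sdata Hy t p)"
    note fE = fE[folded x0_def y0_def aE_def]
    note fX = fX[folded x0_def y0_def aX_def]
    note fY = fY[folded x0_def y0_def aY_def]
    have Mt0: "0 \<le> Mt" unfolding Mt_def using E0 X0 Y0 by simp
    have cd: "trunc_cd E Hx Hy p 4 t dt =
      ((E (t + dt) x0 y0 - (E t x0 y0 + dt * (aY $ 2 - aX $ 3))) / dt,
       (Hx (t + dt) x0 y0 - (Hx t x0 y0 + dt * (0 - aE $ 3))) / dt,
       (Hy (t + dt) x0 y0 - (Hy t x0 y0 + dt * (aE $ 2 - 0))) / dt)"
      unfolding trunc_cd_def Let_def aE_def aX_def aY_def x0_def y0_def by (simp add: sdata_def)
    have th: "trunc_th E Hx Hy p 4 t dt =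
      ((E (t + dt) x0 y0 - (aE $ 1 + dt * (aY $ 2 - aX $ 3))) / dt,
       (Hx (t + dt) x0 y0 - (aX $ 1 + dt * (0 - aE $ 3))) / dt,
       (Hy (t + dt) x0 y0 - (aY $ 1 + dt * (aE $ 2 - 0))) / dt)"
      unfolding trunc_th_def Let_def aE_def aX_def aY_def x0_def y0_def by (simp add: sdata_def)
    have z0: "\<bar>(0::real) - 0\<bar> \<le> 0" by simp
    have Cfin: "C * h = (Mt * lam + Q / lam + 2 * Q / D) * h" unfolding C_def ..
    have QhD: "0 \<le> Q * h / D" using Q0 h D by simp
    have Qh2: "0 \<le> Q * h^2" using Q0 by simp
    have zE: "\<bar>E t x0 y0 - E t x0 y0\<bar> \<le> 0" "\<bar>Hx t x0 y0 - Hx t x0 y0\<bar> \<le> 0" "\<bar>Hy t x0 y0 - Hy t x0 y0\<bar> \<le> 0" by simp_all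
    have fE1: "\<bar>aE $ 1 - E t x0 y0\<bar> \<le> Q * h^2" using fE(1) by simp
    have fX1: "\<bar>aX $ 1 - Hx t x0 y0\<bar> \<le> Q * h^2" using fX(1) by simp
    have fY1: "\<bar>aY $ 1 - Hy t x0 y0\<bar> \<le> Q * h^2" using fY(1) by simp
    note fin = final_arith[where Mt=Mt and Q=Q and D=D, OF _ _ _ dt_def lam h(1)]
    have mx: "pt E t x0 y0 = px Hy t x0 y0 - py Hx t x0 y0" "pt Hx t x0 y0 = 0 - py E t x0 y0"
      "pt Hy t x0 y0 = px E t x0 y0 - 0" using maxwell by simp_all
    have c1: "\<bar>fst (trunc_cd E Hx Hy p 4 t dt)\<bar> \<le> C * h"
    proof -
      have "\<bar>fst (trunc_cd E Hx Hy p 4 t dt)\<bar> \<le> Mt * dt + 0 / dt + Q * h / D + Q * h / D"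
        unfolding cd fst_conv by (rule step_arith[OF dt fE(4) mx(1) zE(1) fY(2) fX(3)])
      then show ?thesis unfolding Cfin by (rule fin) (use Mt0 Q0 h D QhD in auto)
    qed
    have c2: "\<bar>fst (snd (trunc_cd E Hx Hy p 4 t dt))\<bar> \<le> C * h"
    proof -
      have "\<bar>fst (snd (trunc_cd E Hx Hy p 4 t dt))\<bar> \<le> Mt * dt + 0 / dt + 0 + Q * h / D"
        unfolding cd fst_conv snd_conv by (rule step_arith[OF dt fX(4) mx(2) zE(2) z0 fE(3)])
      then show ?thesis unfolding Cfin by (rule fin) (use Mt0 Q0 h D QhD in auto)
    qed
    have c3: "\<bar>snd (snd (trunc_cd E Hx Hy p 4 t dt))\<bar> \<le> C * h"
    proof -
      have "\<bar>snd (snd (trunc_cd E Hx Hy p 4 t dt))\<bar> \<le> Mt * dt + 0 / dt + Q * h / D + 0"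
        unfolding cd snd_conv by (rule step_arith[OF dt fY(4) mx(3) zE(3) fE(2) z0])
      then show ?thesis unfolding Cfin by (rule fin) (use Mt0 Q0 h D QhD in auto)
    qed
    have c4: "\<bar>fst (trunc_th E Hx Hy p 4 t dt)\<bar> \<le> C * h"
    proof -
      have "\<bar>fst (trunc_th E Hx Hy p 4 t dt)\<bar> \<le> Mt * dt + Q * h^2 / dt + Q * h / D + Q * h / D"
        unfolding th fst_conv by (rule step_arith[OF dt fE(4) mx(1) fE1 fY(2) fX(3)])
      then show ?thesis unfolding Cfin by (rule fin) (use Mt0 Q0 h D QhD in auto)
    qed
    have c5: "\<bar>fst (snd (trunc_th E Hx Hy p 4 t dt))\<bar> \<le> C * h"
    proof -
      have "\<bar>fst (snd (trunc_th E Hx Hy p 4 t dt))\<bar> \<le> Mt * dt + Q * h^2 / dt + 0 + Q * h / D"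
        unfolding th fst_conv snd_conv by (rule step_arith[OF dt fX(4) mx(2) fX1 z0 fE(3)])
      then show ?thesis unfolding Cfin by (rule fin) (use Mt0 Q0 h D QhD in auto)
    qed
    have c6: "\<bar>snd (snd (trunc_th E Hx Hy p 4 t dt))\<bar> \<le> C * h"
    proof -
      have "\<bar>snd (snd (trunc_th E Hx Hy p 4 t dt))\<bar> \<le> Mt * dt + Q * h^2 / dt + Q * h / D + 0"
        unfolding th snd_conv by (rule step_arith[OF dt fY(4) mx(3) fY1 fE(2) z0])
      then show ?thesis unfolding Cfin by (rule fin) (use Mt0 Q0 h D QhD in auto)
    qed
    show ?thesis using c1 c2 c3 c4 c5 c6 unfolding p_def dt_def by blast
  qed
  show ?thesis
    unfolding first_order_def Let_def
    by (intro conjI exI[of _ C]; clarify; simp only: key)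
qed

end
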